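(* Consider a multilayer network with $M$ layers, where layer $h\in\{1,\dots,M\}$ has $N_h$ nodes, node set $V=\{(i,h): h=1,\dots,M,\ i=1,\dots,N_h\}$, and nonnegative weights $w_{ij}(hk)$ between node $i$ of layer $h$ and node $j$ of layer $k$. Assume the network is weighted, undirected and connected, so that the multilayer Laplacian $\mathcal{L}$ (defined in the context) is symmetric: $\mathcal{L}_{(i,h),(j,k)}=\mathcal{L}_{(j,k),(i,h)}$. Let each $f_{ih}:\mathbb{R}\to\mathbb{R}$, $(i,h)\in V$, be convex (and differentiable with Lipschitz continuous derivative), let $\tilde f(Y)=\sum_{(i,h)\in V} f_{ih}(y_{ih})$ for $Y=(y_{ih})\in\mathbb{R}^V$, and consider the augmented Lagrangian $$\mathcal{L}_m(Y,\Lambda)=\tilde f(Y)+\langle \Lambda,\mathcal{L}Y\rangle+\tfrac12\langle Y,\mathcal{L}Y\rangle,\qquad Y,\Lambda\in\mathbb{R}^V,$$ associated with the problem $\min_{Y}\tilde f(Y)$ subject to $\mathcal{L}Y=0$. Let $U\in\mathbb{R}^V$ be the all-ones tensor. Then: (1) If $(Y^\star,\Lambda^\star)$ is a saddle point of $\mathcal{L}_m$ (i.e. a solution of $\min_Y\max_\Lambda\mathcal{L}_m$), then $(Y^\star,\Lambda^\star+\gamma U)$ is also a saddle (minimax) point for every $\gamma\in\mathbb{R}$. (2) If $(Y^\star,\Lambda^\star)$ is a saddle point of $\mathcal{L}_m$, then $Y^\star=x^\star U$ for some $x^\star\in\mathbb{R}$, and $x^\star$ solves the primal problem $\min_{x\in\mathbb{R}}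 \sum_{(i,h)\in V} f_{ih}(x)$. (3) There exists a saddle point $(Y^\star,\Lambda^\star)$ of $\mathcal{L}_m$ satisfying $\mathcal{L}\Lambda^\star+\nabla\tilde f(Y^\star)=0$.
   Context: For $T\in\mathbb{R}^V$, $(\mathcal{L}T)_{ih}=\sum_{k=1}^M\sum_{j=1}^{N_k} l_{ij}(hk)\,t_{jk}$, where $l_{ij}(hk)=\Big[\sum_{n=1}^M\sum_{m=1}^{N_n} w_{mi}(nh)\Big]\delta_{ij}\delta_{hk}-w_{ij}(hk)$ (the multilayer combinatorial Laplacian tensor; $\delta$ is the Kronecker delta, and $w_{ij}(hh)$ are intralayer weights, $w_{ij}(hk)$ for $h\ne k$ interlayer weights). Undirected means $w_{ij}(hk)=w_{ji}(kh)$; connected means the graph on $V$ with an edge between $(i,h)$ and $(j,k)$ whenever $w_{ij}(hk)>0$ is connected. $\langle A,B\rangle=\sum_{(i,h)\in V}a_{ih}b_{ih}$. $\nabla\tilde f(Y)$ has components $f_{ih}'(y_{ih})$. *)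

theory Defs
  imports "HOL-Analysis.Analysis"
begin

text \<open>Nodes are pairs (i,h): node i of layer h. Tensors in R^V are functions
  on nat \<times> nat (only their values on V matter). The weight w (i,h) (j,k) is
  w_ij(hk).\<close>

definition node_set :: "nat \<Rightarrow> (nat \<Rightarrow> nat) \<Rightarrow> (nat \<times> nat) set" where
  "node_set M N = {(i,h). 1 \<le> h \<and> h \<le> M \<and> 1 \<le> i \<and> i \<le> N h}"

definition ml_inner :: "(nat \<times> nat) set \<Rightarrow> (nat \<times> nat \<Rightarrow> real) \<Rightarrow> (nat \<times> nat \<Rightarrow> real) \<Rightarrow> real" where
  "ml_inner V A B = (\<Sum>p\<in>V. A p * B p)"

definition lap_entry :: "(nat \<times> nat) set \<Rightarrow> (nat \<times> nat \<Rightarrow> nat \<times> nat \<Rightarrow> real) \<Rightarrow> nat \<times> nat \<Rightarrow> nat \<times> nat \<Rightarrow> real" where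
  "lap_entry V w p q = (if p = q then (\<Sum>r\<in>V. w r p) else 0) - w p q"

definition lap_apply :: "(nat \<times> nat) set \<Rightarrow> (nat \<times> nat \<Rightarrow> nat \<times> nat \<Rightarrow> real) \<Rightarrow> (nat \<times> nat \<Rightarrow> real) \<Rightarrow> (nat \<times> nat \<Rightarrow> real)" where
  "lap_apply V w T = (\<lambda>p. \<Sum>q\<in>V. lap_entry V w p q * T q)"

definition ml_undirected :: "(nat \<times> nat) set \<Rightarrow> (nat \<times> nat \<Rightarrow> nat \<times> nat \<Rightarrow> real) \<Rightarrow> bool" where
  "ml_undirected V w \<longleftrightarrow> (\<forall>p\<in>V. \<forall>q\<in>V. w p q = w q p)"

definition ml_connected :: "(nat \<times> nat) set \<Rightarrow> (nat \<times> nat \<Rightarrow> nat \<times> nat \<Rightarrow> real) \<Rightarrow> bool" where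
  "ml_connected V w \<longleftrightarrow>
     (\<forall>p\<in>V. \<forall>q\<in>V. (\<lambda>a b. a \<in> V \<and> b \<in> V \<and> w a b > 0)\<^sup>*\<^sup>* p q)"

definition ftilde :: "(nat \<times> nat) set \<Rightarrow> (nat \<times> nat \<Rightarrow> real \<Rightarrow> real) \<Rightarrow> (nat \<times> nat \<Rightarrow> real) \<Rightarrow> real" where
  "ftilde V f Y = (\<Sum>p\<in>V. f p (Y p))"

definition aug_lag :: "(nat \<times> nat) set \<Rightarrow> (nat \<times> nat \<Rightarrow> nat \<times> nat \<Rightarrow> real) \<Rightarrow> (nat \<times> nat \<Rightarrow> real \<Rightarrow> real)
     \<Rightarrow> (nat \<times> nat \<Rightarrow> real) \<Rightarrow> (nat \<times> nat \<Rightarrow> real) \<Rightarrow> real" where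
  "aug_lag V w f Y Lam = ftilde V f Y + ml_inner V Lam (lap_apply V w Y)
      + 1/2 * ml_inner V Y (lap_apply V w Y)"

definition saddle_point :: "(nat \<times> nat) set \<Rightarrow> (nat \<times> nat \<Rightarrow> nat \<times> nat \<Rightarrow> real) \<Rightarrow> (nat \<times> nat \<Rightarrow> real \<Rightarrow> real)
     \<Rightarrow> (nat \<times> nat \<Rightarrow> real) \<Rightarrow> (nat \<times> nat \<Rightarrow> real) \<Rightarrow> bool" where
  "saddle_point V w f Ys Ls \<longleftrightarrow>
     (\<forall>Y Lam. aug_lag V w f Ys Lam \<le> aug_lag V w f Ys Ls \<and> aug_lag V w f Ys Ls \<le> aug_lag V w f Y Ls)"

end

theory Submission imports Defs "HOL-Library.Function_Algebras" begin
lemma lap_eq: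
  assumes "finite V" "p \<in> V"
  shows "lap_apply V w T p = (\<Sum>r\<in>V. w r p) * T p - (\<Sum>q\<in>V. w p q * T q)"
proof -
  have "lap_apply V w T p = (\<Sum>q\<in>V. (if p = q then (\<Sum>r\<in>V. w r p) * T q else 0) - w p q * T q)"
    unfolding lap_apply_def lap_entry_def by (rule sum.cong) (auto simp: left_diff_distrib)
  also have "\<dots> = (\<Sum>r\<in>V. w r p) * T p - (\<Sum>q\<in>V. w p q * T q)"
    using assms by (simp add: sum_subtractf)
  finally show ?thesis .
qed
lemma bil:
  assumes fin: "finite V" and sym: "\<forall>p\<in>V. \<forall>q\<in>V. w p q = w q p"
  shows "ml_inner V A (lap_apply V w T) =
     (\<Sum>p\<in>V. \<Sum>q\<in>V. w p q * (A p - A q) * (T p - T q)) / 2"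
proof -
  define S1 where "S1 = (\<Sum>p\<in>V. \<Sum>q\<in>V. w p q * A p * T p)"
  define S2 where "S2 = (\<Sum>p\<in>V. \<Sum>q\<in>V. w p q * A p * T q)"
  define S3 where "S3 = (\<Sum>p\<in>V. \<Sum>q\<in>V. w p q * A q * T p)"
  define S4 where "S4 = (\<Sum>p\<in>V. \<Sum>q\<in>V. w p q * A q * T q)"
  have "ml_inner V A (lap_apply V w T) = (\<Sum>p\<in>V. (\<Sum>q\<in>V. w p q * A p * T p) - (\<Sum>q\<in>V. w p q * A p * T q))"
    unfolding ml_inner_def
  proof (rule sum.cong[OF refl])
    fix p assume p: "p \<in> V"
    have "(\<Sum>r\<in>V. w r p) = (\<Sum>q\<in>V. w p q)" using sym p by (intro sum.cong) auto
    then show "A p * lap_apply V w T p = (\<Sum>q\<in>V. w p q * A p * T p) - (\<Sum>q\<in>V. w p q * A p * T q)"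
      by (simp add: lap_eq[OF fin p] right_diff_distrib sum_distrib_left sum_distrib_right mult_ac)
  qed
  also have "\<dots> = S1 - S2" by (simp add: S1_def S2_def sum_subtractf)
  finally have L: "ml_inner V A (lap_apply V w T) = S1 - S2" .
  have "S4 = (\<Sum>q\<in>V. \<Sum>p\<in>V. w p q * A q * T q)" unfolding S4_def by (rule sum.swap)
  also have "\<dots> = S1" unfolding S1_def using sym by (intro sum.cong) auto
  finally have 41: "S4 = S1" .
  have "S3 = (\<Sum>q\<in>V. \<Sum>p\<in>V. w p q * A q * T p)" unfolding S3_def by (rule sum.swap)
  also have "\<dots> = S2" unfolding S2_def using sym by (intro sum.cong) auto
  finally have 32: "S3 = S2" .
  have "(\<Sum>p\<in>V. \<Sum>q\<in>V. w p q * (A p - A q) * (T p - T q)) = S1 - S2 - S3 + S4"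
    unfolding S1_def S2_def S3_def S4_def
    by (simp add: sum_subtractf sum.distrib algebra_simps)
  then show ?thesis using L 41 32 by simp
qed

lemma lap_const:
  assumes fin: "finite V" and sym: "\<forall>p\<in>V. \<forall>q\<in>V. w p q = w q p" and p: "p \<in> V"
  shows "lap_apply V w (\<lambda>_. c) p = 0"
proof -
  have "(\<Sum>r\<in>V. w r p) = (\<Sum>q\<in>V. w p q)" using sym p by (intro sum.cong) auto
  then show ?thesis by (simp add: lap_eq[OF fin p] sum_distrib_right)
qed

lemma inner_const:
  assumes fin: "finite V" and sym: "\<forall>p\<in>V. \<forall>q\<in>V. w p q = w q p"
  shows "ml_inner V (\<lambda>_. c) (lap_apply V w T) = 0"
  by (simp add: bil[OF fin sym])

lemma bil_sym:
  assumes fin: "finite V" and sym: "\<forall>p\<in>V. \<forall>q\<in>V. w p q = w q p"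
  shows "ml_inner V A (lap_apply V w T) = ml_inner V T (lap_apply V w A)"
  by (simp add: bil[OF fin sym] mult_ac)

lemma quad_nonneg:
  assumes fin: "finite V" and sym: "\<forall>p\<in>V. \<forall>q\<in>V. w p q = w q p"
    and nn: "\<forall>p\<in>V. \<forall>q\<in>V. w p q \<ge> 0"
  shows "ml_inner V T (lap_apply V w T) \<ge> 0"
proof -
  have "(\<Sum>p\<in>V. \<Sum>q\<in>V. w p q * (T p - T q) * (T p - T q)) \<ge> 0"
    using nn by (intro sum_nonneg) (simp add: mult.assoc)
  then show ?thesis by (simp add: bil[OF fin sym])
qed

lemma kernel_const:
  assumes fin: "finite V" and sym: "\<forall>p\<in>V. \<forall>q\<in>V. w p q = w q p"
    and nn: "\<forall>p\<in>V. \<forall>q\<in>V. w p q \<ge> 0" and conn: "ml_connected V w"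
    and ker: "\<forall>p\<in>V. lap_apply V w T p = 0"
  shows "\<forall>p\<in>V. \<forall>q\<in>V. T p = T q"
proof -
  have "ml_inner V T (lap_apply V w T) = 0" using ker by (simp add: ml_inner_def)
  hence "(\<Sum>p\<in>V. \<Sum>q\<in>V. w p q * (T p - T q) * (T p - T q)) = 0" by (simp add: bil[OF fin sym])
  moreover have nn2: "\<forall>p\<in>V. \<forall>q\<in>V. w p q * (T p - T q) * (T p - T q) \<ge> 0"
    using nn by (simp add: mult.assoc)
  ultimately have "\<forall>p\<in>V. (\<Sum>q\<in>V. w p q * (T p - T q) * (T p - T q)) = 0"
    using fin by (subst sum_nonneg_eq_0_iff[symmetric]) (auto intro!: sum_nonneg)
  hence z: "\<forall>p\<in>V. \<forall>q\<in>V. w p q * (T p - T q) * (T p - T q) = 0"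
    using fin nn2 by (simp add: sum_nonneg_eq_0_iff)
  have edge: "T a = T b" if "a \<in> V" "b \<in> V" "w a b > 0" for a b
    using z that by (force simp: mult.assoc)
  show ?thesis
  proof (intro ballI)
    fix p q assume p: "p \<in> V" and q: "q \<in> V"
    have "(\<lambda>a b. a \<in> V \<and> b \<in> V \<and> w a b > 0)\<^sup>*\<^sup>* p q" using conn p q by (simp add: ml_connected_def)
    then show "T p = T q"
      by (induction rule: rtranclp_induct) (auto dest: edge)
  qed
qed

definition scf :: "real \<Rightarrow> ('a \<Rightarrow> real) \<Rightarrow> ('a \<Rightarrow> real)" where
  "scf c x = (\<lambda>p. c * x p)"

lemma vs_scf: "vector_space (scf :: real \<Rightarrow> ('a \<Rightarrow> real) \<Rightarrow> ('a \<Rightarrow> real))"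
  by unfold_locales (auto simp: scf_def func_plus algebra_simps)

lemma inj_endo_surj:
  fixes A :: "('a \<Rightarrow> real) \<Rightarrow> ('a \<Rightarrow> real)"
  assumes lin: "Vector_Spaces.linear scf scf A" and sub: "module.subspace scf S"
    and fb: "finite B" and SB: "S \<subseteq> module.span scf B"
    and into: "A ` S \<subseteq> S" and inj: "inj_on A S"
  shows "S \<subseteq> A ` S"
proof -
  interpret vs: vector_space "scf :: real \<Rightarrow> ('a \<Rightarrow> real) \<Rightarrow> ('a \<Rightarrow> real)" by (rule vs_scf)
  interpret la: Vector_Spaces.linear scf scf A by (rule lin)
  obtain C where C: "C \<subseteq> S" "vs.independent C" "S \<subseteq> vs.span C"
    using vs.basis_exists[of S] by metis
  have spanC: "vs.span C = S" using vs.span_subspace[OF C(1) C(3) sub] .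
  have CB: "C \<subseteq> vs.span B" using C(1) SB by auto
  have fC: "finite C" using vs.independent_span_bound[OF fb C(2) CB] by simp
  have injC: "inj_on A (vs.span C)" using inj spanC by simp
  have iAC: "vs.independent (A ` C)"
    using la.independent_injective_image[OF C(2) injC] .
  have cAC: "card (A ` C) = card C"
    using card_image[OF inj_on_subset[OF inj C(1)]] .
  show ?thesis
  proof
    fix y assume y: "y \<in> S"
    have "y \<in> vs.span (A ` C)"
    proof (rule ccontr)
      assume ny: "y \<notin> vs.span (A ` C)"
      hence ind: "vs.independent (insert y (A ` C))" using vs.independent_insertI iAC by blast
      have sub2: "insert y (A ` C) \<subseteq> vs.span C" using y into C(1) spanC by auto
      have "card (insert y (A ` C)) \<le> card C" using vs.independent_span_bound[OF fC ind sub2] by simp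
      moreover have "y \<notin> A ` C" using ny vs.span_base by blast
      ultimately show False using cAC fC by simp
    qed
    also have "vs.span (A ` C) = A ` vs.span C" by (rule la.span_image)
    finally show "y \<in> A ` S" using spanC by simp
  qed
qed

lemma sum_fun_apply: "finite A \<Longrightarrow> (\<Sum>q\<in>A. F q) p = (\<Sum>q\<in>A. (F q p :: real))"
  by (induction A rule: finite_induct) (simp_all add: func_plus func_zero)

lemma solve:
  assumes fin: "finite V" and sym: "\<forall>p\<in>V. \<forall>q\<in>V. w p q = w q p"
    and nn: "\<forall>p\<in>V. \<forall>q\<in>V. w p q \<ge> 0" and conn: "ml_connected V w"
    and g0: "(\<Sum>p\<in>V. g p) = 0"
  shows "\<exists>Lam. \<forall>p\<in>V. lap_apply V w Lam p = g p"
proof -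
  interpret vs: vector_space "scf :: real \<Rightarrow> (nat \<times> nat \<Rightarrow> real) \<Rightarrow> (nat \<times> nat \<Rightarrow> real)" by (rule vs_scf)
  define Lr where "Lr = (\<lambda>T p. if p \<in> V then lap_apply V w T p else 0)"
  define S where "S = {T :: nat \<times> nat \<Rightarrow> real. (\<forall>p. p \<notin> V \<longrightarrow> T p = 0) \<and> (\<Sum>p\<in>V. T p) = 0}"
  define B where "B = (\<lambda>q p. if p = q then 1 else (0::real)) ` V"
  have lin: "Vector_Spaces.linear scf scf Lr"
    apply unfold_locales
     apply (rule ext) apply (simp add: Lr_def lap_apply_def func_plus distrib_left sum.distrib)
    apply (rule ext) apply (simp add: Lr_def lap_apply_def scf_def sum_distrib_left mult_ac)
    done
  have sub: "vs.subspace S"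
    unfolding vs.subspace_def
  proof (intro conjI ballI allI)
    show "0 \<in> S" unfolding S_def by (simp add: func_zero)
  next
    fix x y assume x: "x \<in> S" and y: "y \<in> S"
    have a: "\<forall>p. p \<notin> V \<longrightarrow> x p = 0" "\<forall>p. p \<notin> V \<longrightarrow> y p = 0"
      "(\<Sum>p\<in>V. x p) = 0" "(\<Sum>p\<in>V. y p) = 0" using x y unfolding S_def by blast+
    have "\<forall>p. p \<notin> V \<longrightarrow> (x + y) p = 0" using a(1,2) by (simp add: func_plus)
    moreover have "(\<Sum>p\<in>V. (x + y) p) = 0" using a(3,4) by (simp add: func_plus sum.distrib)
    ultimately show "x + y \<in> S" unfolding S_def by blast
  next
    fix c x assume x: "x \<in> S"
    have a: "\<forall>p. p \<notin> V \<longrightarrow> x p = 0" "(\<Sum>p\<in>V. x p) = 0" using x unfolding S_def by blast+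
    have "\<forall>p. p \<notin> V \<longrightarrow> scf c x p = 0" using a(1) by (simp add: scf_def)
    moreover have "(\<Sum>p\<in>V. scf c x p) = 0" using a(2) by (simp add: scf_def sum_distrib_left[symmetric])
    ultimately show "scf c x \<in> S" unfolding S_def by blast
  qed
  have fb: "finite B" unfolding B_def by (rule finite_imageI[OF fin])
  have SB: "S \<subseteq> vs.span B"
  proof
    fix T assume T: "T \<in> S"
    have eq: "T = (\<Sum>q\<in>V. scf (T q) (\<lambda>p. if p = q then 1 else 0))"
    proof (rule ext)
      fix p
      show "T p = (\<Sum>q\<in>V. scf (T q) (\<lambda>p. if p = q then 1 else 0)) p"
      proof (cases "p \<in> V")
        case True then show ?thesis using fin by (simp add: sum_fun_apply scf_def if_distrib cong: if_cong)
      next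
        case False
        have "T p = 0" using T False unfolding S_def by blast
        moreover have "(\<Sum>q\<in>V. T q * (if p = q then 1 else 0)) = 0"
          using False by (intro sum.neutral) auto
        ultimately show ?thesis using fin by (simp add: sum_fun_apply scf_def)
      qed
    qed
    have "(\<Sum>q\<in>V. scf (T q) (\<lambda>p. if p = q then 1 else 0)) \<in> vs.span B"
      by (intro vs.span_sum vs.span_scale vs.span_base) (auto simp: B_def)
    then show "T \<in> vs.span B" by (subst eq)
  qed
  have into: "Lr ` S \<subseteq> S"
  proof
    fix y assume "y \<in> Lr ` S"
    then obtain T where y: "y = Lr T" by auto
    have "(\<Sum>p\<in>V. lap_apply V w T p) = ml_inner V (\<lambda>_. 1) (lap_apply V w T)"
      by (simp add: ml_inner_def)
    also have "\<dots> = 0" by (rule inner_const[OF fin sym])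
    finally have s0: "(\<Sum>p\<in>V. lap_apply V w T p) = 0" .
    have "(\<Sum>p\<in>V. Lr T p) = 0" using s0 unfolding Lr_def by simp
    moreover have "\<forall>p. p \<notin> V \<longrightarrow> Lr T p = 0" unfolding Lr_def by simp
    ultimately show "y \<in> S" unfolding S_def y by blast
  qed
  have inj: "inj_on Lr S"
  proof (rule inj_onI)
    fix x y assume x: "x \<in> S" and y: "y \<in> S" and e: "Lr x = Lr y"
    define D where "D = (\<lambda>p. x p - y p)"
    have "\<forall>p\<in>V. lap_apply V w D p = 0"
    proof
      fix p assume p: "p \<in> V"
      have "lap_apply V w D p = lap_apply V w x p - lap_apply V w y p"
        by (simp add: D_def lap_apply_def sum_subtractf right_diff_distrib)
      also have "\<dots> = 0" using fun_cong[OF e, of p] p by (simp add: Lr_def)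
      finally show "lap_apply V w D p = 0" .
    qed
    hence cst: "\<forall>p\<in>V. \<forall>q\<in>V. D p = D q" by (rule kernel_const[OF fin sym nn conn])
    have sx: "(\<Sum>p\<in>V. x p) = 0" "(\<Sum>p\<in>V. y p) = 0" using x y unfolding S_def by blast+
    have sD: "(\<Sum>p\<in>V. D p) = 0" using sx by (simp add: D_def sum_subtractf)
    have "\<forall>p\<in>V. D p = 0"
    proof
      fix p assume p: "p \<in> V"
      have "(\<Sum>q\<in>V. D q) = (\<Sum>q\<in>V. D p)" using cst p by (intro sum.cong refl) blast
      hence "real (card V) * D p = 0" using sD by simp
      moreover have "card V > 0" using fin p card_gt_0_iff by blast
      ultimately show "D p = 0" by simp
    qed
    then show "x = y"
    proof -
      assume z: "\<forall>p\<in>V. D p = 0"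
      have ox: "\<forall>p. p \<notin> V \<longrightarrow> x p = 0" "\<forall>p. p \<notin> V \<longrightarrow> y p = 0" using x y unfolding S_def by blast+
      show "x = y"
      proof
        fix p show "x p = y p"
        proof (cases "p \<in> V")
          case True thus ?thesis using z by (simp add: D_def)
        next
          case False thus ?thesis using ox by metis
        qed
      qed
    qed
  qed
  have "S \<subseteq> Lr ` S" by (rule inj_endo_surj[OF lin sub fb SB into inj])
  moreover have "(\<lambda>p. if p \<in> V then g p else 0) \<in> S"
    using g0 fin unfolding S_def by simp
  ultimately obtain Lam where "(\<lambda>p. if p \<in> V then g p else 0) = Lr Lam" by blast
  hence "\<forall>p\<in>V. lap_apply V w Lam p = g p"
    unfolding Lr_def by (metis (mono_tags))
  then show ?thesis by blast
qed
theorem lemma1: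
  fixes M :: nat and N :: "nat \<Rightarrow> nat"
    and w :: "nat \<times> nat \<Rightarrow> nat \<times> nat \<Rightarrow> real"
    and f f' :: "nat \<times> nat \<Rightarrow> real \<Rightarrow> real"
  defines "V \<equiv> node_set M N"
  assumes nonneg: "\<forall>p\<in>V. \<forall>q\<in>V. w p q \<ge> 0"
    and undir: "ml_undirected V w"
    and conn: "ml_connected V w"
    and cvx: "\<forall>p\<in>V. convex_on UNIV (f p)"
    and deriv: "\<forall>p\<in>V. \<forall>x. (f p has_real_derivative f' p x) (at x)"
    and lip: "\<forall>p\<in>V. \<exists>C. lipschitz_on C UNIV (f' p)"
    and primal_solvable: "\<exists>x. \<forall>z. (\<Sum>p\<in>V. f p x) \<le> (\<Sum>p\<in>V. f p z)"
  shows "(\<forall>Ys Ls. saddle_point V w f Ys Ls \<longrightarrow>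
            (\<forall>\<gamma>::real. saddle_point V w f Ys (\<lambda>p. Ls p + \<gamma>)))
       \<and> (\<forall>Ys Ls. saddle_point V w f Ys Ls \<longrightarrow>
            (\<exists>xs. (\<forall>p\<in>V. Ys p = xs) \<and> (\<forall>z. (\<Sum>p\<in>V. f p xs) \<le> (\<Sum>p\<in>V. f p z))))
       \<and> (\<exists>Ys Ls. saddle_point V w f Ys Ls \<and>
            (\<forall>p\<in>V. lap_apply V w Ls p + f' p (Ys p) = 0))"
proof -
  have fin: "finite V"
  proof -
    have "V \<subseteq> {..(\<Sum>h\<le>M. N h)} \<times> {..M}"
    proof
      fix x assume "x \<in> V"
      then obtain i h where x: "x = (i, h)" "h \<le> M" "i \<le> N h" by (auto simp: V_def node_set_def)
      have "N h \<le> (\<Sum>h\<le>M. N h)" using x(2) by (intro member_le_sum) auto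
      then show "x \<in> {..(\<Sum>h\<le>M. N h)} \<times> {..M}" using x by auto
    qed
    then show ?thesis by (rule finite_subset) simp
  qed
  have sym: "\<forall>p\<in>V. \<forall>q\<in>V. w p q = w q p" using undir by (simp add: ml_undirected_def)
  have shift: "aug_lag V w f Y (\<lambda>p. Ls p + \<gamma>) = aug_lag V w f Y Ls" for Y Ls \<gamma>
  proof -
    have "ml_inner V (\<lambda>p. Ls p + \<gamma>) (lap_apply V w Y) =
          ml_inner V Ls (lap_apply V w Y) + ml_inner V (\<lambda>_. \<gamma>) (lap_apply V w Y)"
      by (simp add: ml_inner_def distrib_right sum.distrib)
    then show ?thesis using inner_const[OF fin sym] by (simp add: aug_lag_def)
  qed
  have P1: "\<forall>Ys Ls. saddle_point V w f Ys Ls \<longrightarrow>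
            (\<forall>\<gamma>::real. saddle_point V w f Ys (\<lambda>p. Ls p + \<gamma>))"
    by (simp add: saddle_point_def shift)
  have const_val: "aug_lag V w f Y Lam = ftilde V f Y" if "\<forall>p\<in>V. lap_apply V w Y p = 0" for Y Lam
    using that by (simp add: aug_lag_def ml_inner_def)
  have P2: "\<forall>Ys Ls. saddle_point V w f Ys Ls \<longrightarrow>
            (\<exists>xs. (\<forall>p\<in>V. Ys p = xs) \<and> (\<forall>z. (\<Sum>p\<in>V. f p xs) \<le> (\<Sum>p\<in>V. f p z)))"
  proof (intro allI impI)
    fix Ys Ls assume sp: "saddle_point V w f Ys Ls"
    let ?X = "lap_apply V w Ys"
    have "aug_lag V w f Ys (\<lambda>p. Ls p + ?X p) \<le> aug_lag V w f Ys Ls"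
      using sp by (simp add: saddle_point_def)
    moreover have "ml_inner V (\<lambda>p. Ls p + ?X p) ?X = ml_inner V Ls ?X + ml_inner V ?X ?X"
      by (simp add: ml_inner_def distrib_right sum.distrib)
    ultimately have le: "ml_inner V ?X ?X \<le> 0" by (simp add: aug_lag_def)
    have "\<forall>p\<in>V. ?X p * ?X p = 0"
    proof -
      have "(\<Sum>p\<in>V. ?X p * ?X p) \<ge> 0" by (intro sum_nonneg) simp
      hence "(\<Sum>p\<in>V. ?X p * ?X p) = 0" using le by (simp add: ml_inner_def)
      thus ?thesis using fin by (simp add: sum_nonneg_eq_0_iff)
    qed
    hence X0: "\<forall>p\<in>V. ?X p = 0" by simp
    have cst: "\<forall>p\<in>V. \<forall>q\<in>V. Ys p = Ys q" by (rule kernel_const[OF fin sym nonneg conn X0])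
    show "\<exists>xs. (\<forall>p\<in>V. Ys p = xs) \<and> (\<forall>z. (\<Sum>p\<in>V. f p xs) \<le> (\<Sum>p\<in>V. f p z))"
    proof (cases "V = {}")
      case True then show ?thesis by simp
    next
      case False
      then obtain p0 where p0: "p0 \<in> V" by blast
      have all: "\<forall>p\<in>V. Ys p = Ys p0" using cst p0 by blast
      have "(\<Sum>p\<in>V. f p (Ys p0)) \<le> (\<Sum>p\<in>V. f p z)" for z
      proof -
        have "(\<Sum>p\<in>V. f p (Ys p0)) = aug_lag V w f Ys Ls"
          using const_val[OF X0] all by (simp add: ftilde_def)
        also have "\<dots> \<le> aug_lag V w f (\<lambda>_. z) Ls" using sp by (simp add: saddle_point_def)
        also have "\<dots> = (\<Sum>p\<in>V. f p z)"
          using const_val lap_const[OF fin sym] by (simp add: ftilde_def)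
        finally show ?thesis .
      qed
      then show ?thesis using all by blast
    qed
  qed
  have P3: "\<exists>Ys Ls. saddle_point V w f Ys Ls \<and>
            (\<forall>p\<in>V. lap_apply V w Ls p + f' p (Ys p) = 0)"
  proof -
    obtain x where xm: "\<forall>z. (\<Sum>p\<in>V. f p x) \<le> (\<Sum>p\<in>V. f p z)" using primal_solvable by blast
    have D: "((\<lambda>z. \<Sum>p\<in>V. f p z) has_real_derivative (\<Sum>p\<in>V. f' p x)) (at x)"
      by (rule DERIV_sum) (use deriv in blast)
    have g0: "(\<Sum>p\<in>V. f' p x) = 0"
      by (rule DERIV_local_min[OF D, of 1]) (use xm in auto)
    have g0': "(\<Sum>p\<in>V. - f' p x) = 0" using g0 by (simp add: sum_negf)
    obtain Ls where Ls: "\<forall>p\<in>V. lap_apply V w Ls p = - f' p x"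
      using solve[OF fin sym nonneg conn g0'] by blast
    define Ys where "Ys = (\<lambda>_::nat\<times>nat. x)"
    have Y0: "\<forall>p\<in>V. lap_apply V w Ys p = 0" unfolding Ys_def using lap_const[OF fin sym] by blast
    have tang: "f p z - f p x \<ge> f' p x * (z - x)" if p: "p \<in> V" for p z
    proof -
      have "(f p has_field_derivative f' p x) (at x within UNIV)" using deriv p by simp
      then show ?thesis
        using convex_on_imp_above_tangent[of UNIV "f p" x z "f' p x"] cvx p by simp
    qed
    have sp: "saddle_point V w f Ys Ls"
      unfolding saddle_point_def
    proof (intro allI conjI)
      fix Y Lam
      show "aug_lag V w f Ys Lam \<le> aug_lag V w f Ys Ls" using const_val[OF Y0] by simp
      have "ftilde V f Y - ftilde V f Ys \<ge> (\<Sum>p\<in>V. f' p x * (Y p - x))"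
        unfolding ftilde_def Ys_def sum_subtractf[symmetric] by (intro sum_mono tang)
      also have "(\<Sum>p\<in>V. f' p x * (Y p - x)) = (\<Sum>p\<in>V. f' p x * Y p) - x * (\<Sum>p\<in>V. f' p x)"
        by (simp add: right_diff_distrib sum_subtractf sum_distrib_left mult_ac)
      also have "\<dots> = (\<Sum>p\<in>V. f' p x * Y p)" using g0 by simp
      also have "\<dots> = - ml_inner V Y (lap_apply V w Ls)"
        using Ls by (simp add: ml_inner_def sum_negf[symmetric] mult_ac)
      also have "\<dots> = - ml_inner V Ls (lap_apply V w Y)" using bil_sym[OF fin sym] by simp
      finally have "ftilde V f Ys \<le> ftilde V f Y + ml_inner V Ls (lap_apply V w Y)" by simp
      moreover have "ml_inner V Y (lap_apply V w Y) \<ge> 0" by (rule quad_nonneg[OF fin sym nonneg])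
      ultimately show "aug_lag V w f Ys Ls \<le> aug_lag V w f Y Ls"
        using const_val[OF Y0, of Ls] by (simp add: aug_lag_def)
    qed
    moreover have "\<forall>p\<in>V. lap_apply V w Ls p + f' p (Ys p) = 0" using Ls by (simp add: Ys_def)
    ultimately show ?thesis by blast
  qed
  show ?thesis using P1 P2 P3 by blast
qed
end
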